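(* Let $P$ be a polyanalytic polynomial of degree $n$ with only finitely many zeros in $\mathbb{C}$. (i) If $P$ is reducible, say $P=P_1\cdots P_k$ with $k\geq 2$ polyanalytic polynomials $P_j$ of degree $\deg(P_j)=n_j\geq 1$, then $P$ has at most $\sum_{j=1}^k n_j^2$ zeros, and $\sum_{j=1}^k n_j^2<n^2$. (ii) If $n\geq 2$ and $P$ has at least $n^2-2n+3$ zeros, then $P$ is irreducible.
   Context: A polyanalytic polynomial is a function $\mathbb{C}\to\mathbb{C}$ of the form $P(z,\bar z)=\sum_{j+k\le n}\alpha_{j,k} z^j \bar z^{k}$ with complex coefficients (a polynomial in $z$ and $\bar z$); two such polynomials are equal iff all coefficients agree. Its degree is the largest $j+k$ with $\alpha_{j,k}\neq 0$. $P$ is reducible if $P=P_1P_2$ for polyanalytic polynomials with $\deg(P_1),\deg(P_2)\geq 1$, and irreducible otherwise. A zero of $P$ is a point $z\in\mathbb{C}$ with $P(z,\bar z)=0$; zeros are counted as distinct points. *)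

theory Defs
  imports Complex_Main "HOL-Computational_Algebra.Polynomial"
begin

text \<open>A polyanalytic polynomial sum_{j,k} a_{j,k} z^j (cnj z)^k is represented as a
  polynomial in z whose coefficients are polynomials in cnj z:
  coeff (coeff P j) k = a_{j,k}.\<close>

type_synonym polyanalytic = "complex poly poly"

definition pa_eval :: "polyanalytic \<Rightarrow> complex \<Rightarrow> complex" where
  "pa_eval P z = (\<Sum>j\<le>degree P. poly (coeff P j) (cnj z) * z ^ j)"

definition pa_deg :: "polyanalytic \<Rightarrow> nat" where
  "pa_deg P = Max (insert 0 {j + degree (coeff P j) | j. coeff P j \<noteq> 0})"

definition pa_zeros :: "polyanalytic \<Rightarrow> complex set" where
  "pa_zeros P = {z. pa_eval P z = 0}"

definition pa_reducible :: "polyanalytic \<Rightarrow> bool" where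
  "pa_reducible P \<longleftrightarrow> (\<exists>P1 P2. P = P1 * P2 \<and> pa_deg P1 \<ge> 1 \<and> pa_deg P2 \<ge> 1)"

definition pa_irreducible :: "polyanalytic \<Rightarrow> bool" where
  "pa_irreducible P \<longleftrightarrow> \<not> pa_reducible P"

end

theory Submission
imports Defs "Subresultants.Subresultant_Gcd" "HOL-Analysis.Analysis" "HOL-Computational_Algebra.Field_as_Ring"
begin


type_synonym bp = "complex poly poly"

definition ev :: "bp \<Rightarrow> complex \<Rightarrow> complex \<Rightarrow> complex" where
  "ev H x y = poly (map_poly (\<lambda>q. poly q x) H) y"

lemma ev_add[simp]: "ev (A + B) x y = ev A x y + ev B x y"
  unfolding ev_def by (simp add: map_poly_add)

lemma ev_0[simp]: "ev 0 x y = 0"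
  unfolding ev_def by simp

lemma ev_1[simp]: "ev 1 x y = 1"
  unfolding ev_def by simp

lemma ev_mult[simp]: "ev (A * B) x y = ev A x y * ev B x y"
proof -
  interpret m: map_poly_comm_ring_hom "\<lambda>q::complex poly. poly q x" ..
  show ?thesis unfolding ev_def by (simp add: m.hom_mult)
qed

lemma ev_diff[simp]: "ev (A - B) x y = ev A x y - ev B x y"
proof -
  interpret m: map_poly_comm_ring_hom "\<lambda>q::complex poly. poly q x" ..
  show ?thesis unfolding ev_def by (simp add: m.hom_minus)
qed

lemma ev_power[simp]: "ev (A ^ k) x y = ev A x y ^ k"
  by (induction k) auto

lemma ev_sum: "ev (sum f S) x y = (\<Sum>i\<in>S. ev (f i) x y)"
  by (induction S rule: infinite_finite_induct) auto

lemma ev_prod_list: "ev (prod_list Ps) x y = prod_list (map (\<lambda>Q. ev Q x y) Ps)"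
  by (induction Ps) auto

lemma ev_const[simp]: "ev [:[:a:]:] x y = a"
  unfolding ev_def by (simp add: Polynomial.map_poly_pCons)

lemma ev_X[simp]: "ev [:[:0,1:]:] x y = x"
  unfolding ev_def by simp

lemma ev_Y[simp]: "ev [:0,1:] x y = y"
  unfolding ev_def by simp

lemma ev_pCons: "ev (pCons c H) x y = poly c x + y * ev H x y"
  unfolding ev_def by (simp add: Polynomial.map_poly_pCons)

lemma poly_sum_upto:
  fixes p :: "'a::comm_ring_1 poly"
  assumes "degree p \<le> N"
  shows "poly p x = (\<Sum>i\<le>N. coeff p i * x ^ i)"
proof -
  have "poly p x = (\<Sum>i\<le>degree p. coeff p i * x ^ i)" by (rule Polynomial.poly_altdef)
  also have "\<dots> = (\<Sum>i\<le>N. coeff p i * x ^ i)"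
    by (rule sum.mono_neutral_left) (use assms in \<open>auto intro: le_degree\<close>)
  finally show ?thesis .
qed

lemma ev_sum_repr:
  assumes "degree H \<le> N"
  shows "ev H x y = (\<Sum>j\<le>N. poly (coeff H j) x * y ^ j)"
proof -
  have "degree (map_poly (\<lambda>q. poly q x) H) \<le> N"
    using degree_map_poly_le[of "\<lambda>q. poly q x" H] assms by linarith
  then show ?thesis unfolding ev_def
    by (subst poly_sum_upto[of _ N]) (auto simp: coeff_map_poly)
qed

lemma pa_eval_ev: "pa_eval P z = ev P (cnj z) z"
  unfolding pa_eval_def by (subst ev_sum_repr[of _ "degree P"]) (auto simp: mult.commute)

lemma ev_inj:
  assumes "\<And>x y. ev A x y = ev B x y"
  shows "A = B"
proof -
  define D where "D = A - B"
  have D0: "ev D x y = 0" for x y using assms by (simp add: D_def)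
  have "map_poly (\<lambda>q. poly q x) D = 0" for x
    using D0[of x] unfolding ev_def using poly_all_0_iff_0 by blast
  then have "poly (coeff D j) x = 0" for j x
    using coeff_map_poly[of "\<lambda>q. poly q x" D j] by simp
  then have "coeff D j = 0" for j using poly_all_0_iff_0 by blast
  then have "D = 0" by (intro poly_eqI) simp
  then show ?thesis by (simp add: D_def)
qed

subsection \<open>Total degree\<close>

lemma pa_deg_set_finite: "finite {j + degree (coeff P j) | j. coeff P j \<noteq> 0}"
proof -
  have "{j + degree (coeff P j) | j. coeff P j \<noteq> 0} \<subseteq> (\<lambda>j. j + degree (coeff P j)) ` {..degree P}"
    using le_degree by fastforce
  then show ?thesis using finite_surj by blast
qed

lemma pa_deg_le_iff: "pa_deg P \<le> d \<longleftrightarrow> (\<forall>j. coeff P j \<noteq> 0 \<longrightarrow> j + degree (coeff P j) \<le> d)"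
  unfolding pa_deg_def using pa_deg_set_finite[of P] by (auto simp: Max_le_iff)

lemma pa_deg_leI: "(\<And>j. coeff P j \<noteq> 0 \<Longrightarrow> j + degree (coeff P j) \<le> d) \<Longrightarrow> pa_deg P \<le> d"
  using pa_deg_le_iff by blast

lemma pa_deg_ge: "coeff P j \<noteq> 0 \<Longrightarrow> j + degree (coeff P j) \<le> pa_deg P"
  using pa_deg_le_iff by blast

lemma pa_deg_ge': "coeff P j \<noteq> 0 \<Longrightarrow> pa_deg P \<le> m \<Longrightarrow> degree (coeff P j) \<le> m - j"
  using pa_deg_ge[of P j] by linarith

lemma degree_le_pa_deg: "degree P \<le> pa_deg P"
proof (cases "P = 0")
  case False
  then have "coeff P (degree P) \<noteq> 0" by simp
  from pa_deg_ge[OF this] show ?thesis by linarith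
qed simp

lemma pa_deg_attained:
  assumes "P \<noteq> 0"
  shows "\<exists>j. coeff P j \<noteq> 0 \<and> j + degree (coeff P j) = pa_deg P"
proof -
  let ?S = "{j + degree (coeff P j) | j. coeff P j \<noteq> 0}"
  have "pa_deg P \<in> insert 0 ?S" unfolding pa_deg_def
    using pa_deg_set_finite[of P] by (intro Max_in) auto
  then show ?thesis
  proof
    assume h: "pa_deg P = 0"
    have "coeff P (degree P) \<noteq> 0" using assms by simp
    with pa_deg_ge[OF this] h show ?thesis by (intro exI[of _ "degree P"]) auto
  qed auto
qed

lemma pa_deg_0[simp]: "pa_deg 0 = 0"
  using pa_deg_le_iff[of 0 0] by simp

lemma pa_deg_const[simp]: "pa_deg [:[:a:]:] = 0"
  using pa_deg_le_iff[of "[:[:a:]:]" 0] by (auto simp: coeff_pCons split: nat.splits)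

lemma pa_deg_1[simp]: "pa_deg 1 = 0"
  using pa_deg_const[of 1] by (simp only: pCons_one)

lemma pa_deg_add: "pa_deg (A + B) \<le> max (pa_deg A) (pa_deg B)"
proof (rule pa_deg_leI)
  fix j assume nz: "coeff (A + B) j \<noteq> 0"
  show "j + degree (coeff (A + B) j) \<le> max (pa_deg A) (pa_deg B)"
  proof (cases "coeff A j = 0")
    case True
    then have "coeff B j \<noteq> 0" using nz by simp
    with pa_deg_ge[OF this] True show ?thesis by simp
  next
    case FA: False
    show ?thesis
    proof (cases "coeff B j = 0")
      case True
      with pa_deg_ge[OF FA] show ?thesis by simp
    next
      case False
      have "degree (coeff (A + B) j) \<le> max (degree (coeff A j)) (degree (coeff B j))"
        by (simp add: degree_add_le_max)
      with pa_deg_ge[OF FA] pa_deg_ge[OF False] show ?thesis by linarith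
    qed
  qed
qed

lemma pa_deg_sum:
  assumes "\<And>i. i \<in> S \<Longrightarrow> pa_deg (f i) \<le> d"
  shows "pa_deg (sum f S) \<le> d"
  using assms
proof (induction S rule: infinite_finite_induct)
  case (insert x F)
  have a: "pa_deg (f x) \<le> d" "pa_deg (sum f F) \<le> d" using insert by auto
  have "pa_deg (sum f (insert x F)) \<le> max (pa_deg (f x)) (pa_deg (sum f F))"
    using insert.hyps pa_deg_add by simp
  then show ?case using a by (simp add: max_def split: if_splits)
qed auto

lemma pa_deg_mult: "pa_deg (A * B) \<le> pa_deg A + pa_deg B"
proof (rule pa_deg_leI)
  fix k assume nz: "coeff (A * B) k \<noteq> 0"
  let ?a = "pa_deg A" and ?b = "pa_deg B"
  have ck: "coeff (A * B) k = (\<Sum>i\<le>k. coeff A i * coeff B (k - i))" by (rule coeff_mult)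
  have "\<exists>i. i \<le> k \<and> coeff A i * coeff B (k - i) \<noteq> 0"
  proof (rule ccontr)
    assume "\<not> ?thesis"
    then have "coeff (A * B) k = 0" unfolding ck by (intro sum.neutral) auto
    with nz show False by simp
  qed
  then obtain i where i: "i \<le> k" "coeff A i * coeff B (k - i) \<noteq> 0" by blast
  then have "coeff A i \<noteq> 0" "coeff B (k - i) \<noteq> 0" by auto
  from pa_deg_ge[OF this(1)] pa_deg_ge[OF this(2)] i(1) have kle: "k \<le> ?a + ?b" by linarith
  have "degree (coeff (A * B) k) \<le> ?a + ?b - k"
    unfolding ck
  proof (rule degree_sum_le)
    fix i assume "i \<in> {..k}"
    then have ik: "i \<le> k" by simp
    show "degree (coeff A i * coeff B (k - i)) \<le> ?a + ?b - k"
    proof (cases "coeff A i = 0 \<or> coeff B (k - i) = 0")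
      case True then show ?thesis by auto
    next
      case False
      then have "coeff A i \<noteq> 0" "coeff B (k - i) \<noteq> 0" by auto
      from pa_deg_ge[OF this(1)] pa_deg_ge[OF this(2)]
      have "degree (coeff A i) + degree (coeff B (k - i)) \<le> ?a + ?b - k" using ik by linarith
      then show ?thesis using degree_mult_le[of "coeff A i" "coeff B (k - i)"] by linarith
    qed
  qed simp
  then show "k + degree (coeff (A * B) k) \<le> ?a + ?b" using kle by linarith
qed

lemma pa_deg_power: "pa_deg (A ^ k) \<le> k * pa_deg A"
proof (induction k)
  case (Suc k)
  then show ?case using pa_deg_mult[of A "A ^ k"] by simp
qed simp

lemma pa_deg_Y: "pa_deg [:0,1:] \<le> 1"
  by (rule pa_deg_leI) (auto simp: coeff_pCons split: nat.splits)

lemma pa_deg_Lc: "pa_deg [:[:0,1:], [:c:]:] \<le> 1"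
  by (rule pa_deg_leI) (auto simp: coeff_pCons split: nat.splits)

lemma pa_deg_0_iff: "pa_deg P = 0 \<longleftrightarrow> (\<exists>a. P = [:[:a:]:])"
proof
  assume h: "pa_deg P = 0"
  then have "degree P = 0" using degree_le_pa_deg[of P] by simp
  then have P: "P = [:coeff P 0:]" by (metis degree_0_id)
  have "degree (coeff P 0) = 0"
    using pa_deg_ge[of P 0] h by (cases "coeff P 0 = 0") auto
  then have "coeff P 0 = [:coeff (coeff P 0) 0:]" by (metis degree_0_id)
  with P show "\<exists>a. P = [:[:a:]:]" by metis
qed auto

lemma const_unit: "a \<noteq> 0 \<Longrightarrow> is_unit ([:[:a:]:] :: bp)"
  by (simp add: is_unit_const_poly_iff)



definition K :: "complex \<Rightarrow> bp" where "K a = [:[:a:]:]"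
definition Lc :: "complex \<Rightarrow> bp" where "Lc c = [:[:0,1:], [:c:]:]"
definition phi :: "complex \<Rightarrow> complex poly \<Rightarrow> bp" where "phi c q = poly (map_poly K q) (Lc c)"
definition Tc :: "complex \<Rightarrow> bp \<Rightarrow> bp" where "Tc c F = poly (map_poly (phi c) F) [:0,1:]"

lemma K_hom: "comm_ring_hom K"
  by unfold_locales (auto simp: K_def pCons_one)

lemma K_0[simp]: "K 0 = 0" by (simp add: K_def)

lemma phi_0[simp]: "phi c 0 = 0" by (simp add: phi_def)

lemma phi_hom: "comm_ring_hom (phi c)"
proof -
  interpret k: map_poly_comm_ring_hom K unfolding map_poly_comm_ring_hom_def by (rule K_hom)
  show ?thesis
    by unfold_locales (auto simp: phi_def k.hom_mult k.hom_add)
qed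

lemma Tc_mult: "Tc c (F * G) = Tc c F * Tc c G"
proof -
  interpret k: map_poly_comm_ring_hom "phi c" unfolding map_poly_comm_ring_hom_def by (rule phi_hom)
  show ?thesis by (simp add: Tc_def k.hom_mult)
qed

lemma Tc_1[simp]: "Tc c 1 = 1"
proof -
  interpret k: map_poly_comm_ring_hom "phi c" unfolding map_poly_comm_ring_hom_def by (rule phi_hom)
  show ?thesis by (simp add: Tc_def)
qed

lemma ev_phi: "ev (phi c q) x y = poly q (x + c * y)"
proof (induction q)
  case (pCons a q)
  have "phi c (pCons a q) = K a + Lc c * phi c q"
    by (simp add: phi_def Polynomial.map_poly_pCons)
  moreover have "ev (Lc c) x y = x + c * y" by (simp add: Lc_def ev_pCons)
  ultimately show ?case using pCons by (simp add: K_def)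
qed simp

lemma ev_Tc: "ev (Tc c F) x y = ev F (x + c * y) y"
proof (induction F)
  case (pCons a F)
  have "Tc c (pCons a F) = phi c a + [:0,1:] * Tc c F"
    by (simp add: Tc_def Polynomial.map_poly_pCons)
  then show ?case using pCons by (simp add: ev_phi ev_pCons)
qed (simp add: Tc_def)

lemma Tc_inv: "Tc (-c) (Tc c F) = F"
  by (rule ev_inj) (simp add: ev_Tc algebra_simps)

lemma Tc_coprime:
  assumes "coprime F G"
  shows "coprime (Tc c F) (Tc c G)"
proof (rule coprimeI)
  fix d assume d: "d dvd Tc c F" "d dvd Tc c G"
  have "Tc (-c) d dvd F"
  proof -
    from d(1) obtain e where "Tc c F = d * e" by (elim dvdE)
    then have "F = Tc (-c) d * Tc (-c) e" by (metis Tc_inv Tc_mult)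
    then show ?thesis by simp
  qed
  moreover have "Tc (-c) d dvd G"
  proof -
    from d(2) obtain e where "Tc c G = d * e" by (elim dvdE)
    then have "G = Tc (-c) d * Tc (-c) e" by (metis Tc_inv Tc_mult)
    then show ?thesis by simp
  qed
  ultimately have "is_unit (Tc (-c) d)" using assms coprime_common_divisor by blast
  then obtain w where "1 = Tc (-c) d * w" by (elim dvdE)
  then have "Tc c 1 = Tc c (Tc (-c) d * w)" by simp
  also have "\<dots> = Tc c (Tc (-c) d) * Tc c w" by (rule Tc_mult)
  also have "Tc c (Tc (-c) d) = d" using Tc_inv[of "-c" d] by simp
  finally show "is_unit d" by (metis Tc_1 dvdI)
qed

lemma phi_sum: "phi c q = (\<Sum>i\<le>degree q. Lc c ^ i * K (coeff q i))"
  unfolding phi_def using eval_poly_as_sum[of K q "Lc c"] by (simp add: eval_poly_def)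

lemma pa_deg_K[simp]: "pa_deg (K a) = 0" by (simp add: K_def)

lemma pa_deg_Lc_pow: "pa_deg (Lc c ^ i) \<le> i"
proof -
  have "pa_deg (Lc c ^ i) \<le> i * pa_deg (Lc c)" by (rule pa_deg_power)
  also have "\<dots> \<le> i * 1" using pa_deg_Lc[of c] unfolding Lc_def by (rule mult_le_mono2)
  finally show ?thesis by simp
qed

lemma pa_deg_Y_pow: "pa_deg ([:0,1:] ^ i) \<le> i"
proof -
  have "pa_deg ([:0,1:] ^ i) \<le> i * pa_deg [:0,1:]" by (rule pa_deg_power)
  also have "\<dots> \<le> i * 1" using pa_deg_Y by (rule mult_le_mono2)
  finally show ?thesis by simp
qed

lemma pa_deg_phi: "pa_deg (phi c q) \<le> degree q"
  unfolding phi_sum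
proof (rule pa_deg_sum)
  fix i assume "i \<in> {..degree q}"
  then have i: "i \<le> degree q" by simp
  have "pa_deg (Lc c ^ i * K (coeff q i)) \<le> pa_deg (Lc c ^ i) + 0"
    using pa_deg_mult[of "Lc c ^ i" "K (coeff q i)"] by simp
  also have "\<dots> \<le> i" using pa_deg_Lc_pow[of c i] by simp
  finally show "pa_deg (Lc c ^ i * K (coeff q i)) \<le> degree q" using i by simp
qed

lemma Tc_sum:
  assumes "degree F \<le> N"
  shows "Tc c F = (\<Sum>j\<le>N. [:0,1:] ^ j * phi c (coeff F j))"
proof -
  have "degree (map_poly (phi c) F) \<le> N"
    using degree_map_poly_le[of "phi c" F] assms by linarith
  then show ?thesis unfolding Tc_def
    by (subst poly_sum_upto[of _ N]) (auto simp: coeff_map_poly mult.commute)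
qed

lemma pa_deg_Tc: "pa_deg (Tc c F) \<le> pa_deg F"
  unfolding Tc_sum[OF order.refl]
proof (rule pa_deg_sum)
  fix j assume "j \<in> {..degree F}"
  show "pa_deg ([:0,1:] ^ j * phi c (coeff F j)) \<le> pa_deg F"
  proof (cases "coeff F j = 0")
    case False
    have "pa_deg ([:0,1:] ^ j * phi c (coeff F j)) \<le> pa_deg ([:0,1:] ^ j) + pa_deg (phi c (coeff F j))"
      by (rule pa_deg_mult)
    also have "\<dots> \<le> j + degree (coeff F j)"
      using pa_deg_Y_pow[of j] pa_deg_phi[of c "coeff F j"] by (rule add_mono)
    also have "\<dots> \<le> pa_deg F" using pa_deg_ge[OF False] by simp
    finally show ?thesis .
  qed simp
qed

lemma coeff_Lc_mult:
  "coeff (Lc c * H) n = [:0,1:] * coeff H n + (if n = 0 then 0 else [:c:] * coeff H (n - 1))"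
  by (auto simp: Lc_def coeff_pCons split: nat.splits)

lemma coeff_Lc_pow: "i \<le> d \<Longrightarrow> coeff (Lc c ^ i) d = (if i = d then [:c ^ d:] else 0)"
proof (induction i arbitrary: d)
  case 0
  then show ?case by (auto simp: pCons_one coeff_pCons split: nat.splits)
next
  case (Suc i)
  then obtain d' where d: "d = Suc d'" "i \<le> d'" by (cases d) auto
  have "coeff (Lc c ^ Suc i) d = [:0,1:] * coeff (Lc c ^ i) (Suc d') + [:c:] * coeff (Lc c ^ i) d'"
    by (simp add: coeff_Lc_mult d)
  also have "coeff (Lc c ^ i) (Suc d') = 0" using Suc.IH[of "Suc d'"] d by simp
  also have "coeff (Lc c ^ i) d' = (if i = d' then [:c ^ d':] else 0)" using Suc.IH[of d'] d by simp
  finally show ?case using d by auto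
qed

lemma coeff_phi_top:
  assumes "degree q \<le> d"
  shows "coeff (phi c q) d = [:coeff q d * c ^ d:]"
proof -
  have "coeff (phi c q) d = (\<Sum>i\<le>degree q. coeff (Lc c ^ i) d * [:coeff q i:])"
    unfolding phi_sum coeff_sum by (simp add: K_def)
  also have "\<dots> = (\<Sum>i\<le>degree q. if i = d then [:c ^ d:] * [:coeff q d:] else 0)"
    by (rule sum.cong) (use assms coeff_Lc_pow in auto)
  also have "\<dots> = (if d \<le> degree q then [:c ^ d:] * [:coeff q d:] else 0)"
    by (simp add: sum.delta)
  also have "\<dots> = [:coeff q d * c ^ d:]"
    using assms by (auto simp: coeff_eq_0 mult.commute)
  finally show ?thesis .
qed

lemma X_pow_monom: "([:0,1:] :: 'a::comm_semiring_1 poly) ^ j = monom 1 j"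
  by (simp add: monom_altdef)

definition topf :: "nat \<Rightarrow> bp \<Rightarrow> complex poly" where
  "topf m F = (\<Sum>j\<le>m. monom (coeff (coeff F j) (m - j)) (m - j))"

lemma const_sum: "[:sum f A:] = (\<Sum>x\<in>A. [:f x:])"
proof (induction A rule: infinite_finite_induct)
  case (insert x F)
  have "[:sum f (insert x F):] = [:f x:] + [:sum f F:]" using insert.hyps by simp
  then show ?case using insert.hyps insert.IH by simp
qed auto

lemma coeff_Tc_top:
  assumes "pa_deg F \<le> m"
  shows "coeff (Tc c F) m = [:poly (topf m F) c:]"
proof -
  have dF: "degree F \<le> m" using degree_le_pa_deg[of F] assms by linarith
  have "coeff (Tc c F) m = (\<Sum>j\<le>m. coeff ([:0,1:] ^ j * phi c (coeff F j)) m)"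
    unfolding Tc_sum[OF dF] coeff_sum ..
  also have "\<dots> = (\<Sum>j\<le>m. [:coeff (coeff F j) (m - j) * c ^ (m - j):])"
  proof (rule sum.cong)
    fix j assume "j \<in> {..m}"
    then have j: "j \<le> m" by simp
    have dj: "degree (coeff F j) \<le> m - j"
      using pa_deg_ge'[OF _ assms, of j] by (cases "coeff F j = 0") auto
    have "coeff ([:0,1:] ^ j * phi c (coeff F j)) m = coeff (phi c (coeff F j)) (m - j)"
      using j unfolding X_pow_monom by (simp add: coeff_monom_mult)
    also have "\<dots> = [:coeff (coeff F j) (m - j) * c ^ (m - j):]"
      by (rule coeff_phi_top[OF dj])
    finally show "coeff ([:0,1:] ^ j * phi c (coeff F j)) m = [:coeff (coeff F j) (m - j) * c ^ (m - j):]" .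
  qed simp
  also have "\<dots> = [:poly (topf m F) c:]"
    unfolding topf_def poly_sum poly_monom const_sum ..
  finally show ?thesis .
qed

lemma Tc_exact:
  assumes "pa_deg F = m" "poly (topf m F) c \<noteq> 0"
  shows "degree (Tc c F) = m" "coeff (Tc c F) m = [:poly (topf m F) c:]" "pa_deg (Tc c F) \<le> m"
proof -
  show cm: "coeff (Tc c F) m = [:poly (topf m F) c:]" using coeff_Tc_top assms by simp
  show pd: "pa_deg (Tc c F) \<le> m" using pa_deg_Tc[of c F] assms by simp
  have "degree (Tc c F) \<le> m" using degree_le_pa_deg[of "Tc c F"] pd by linarith
  moreover have "m \<le> degree (Tc c F)" using cm assms(2) by (intro le_degree) simp
  ultimately show "degree (Tc c F) = m" by simp
qed

lemma top_nonzero: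
  assumes "F \<noteq> 0"
  shows "topf (pa_deg F) F \<noteq> 0"
proof -
  let ?m = "pa_deg F"
  obtain j0 where j0: "coeff F j0 \<noteq> 0" "j0 + degree (coeff F j0) = ?m"
    using pa_deg_attained[OF assms] by blast
  have "coeff (topf ?m F) (?m - j0) = (\<Sum>j\<le>?m. if j = j0 then coeff (coeff F j) (?m - j) else 0)"
    unfolding topf_def coeff_sum coeff_monom
    by (rule sum.cong) (use j0 in auto)
  also have "\<dots> = coeff (coeff F j0) (degree (coeff F j0))"
  proof -
    have e: "?m - j0 = degree (coeff F j0)" and le: "j0 \<le> ?m" using j0(2) by linarith+
    show ?thesis using le by (simp add: sum.delta e)
  qed
  also have "\<dots> \<noteq> 0" using j0 by simp
  finally show ?thesis by auto
qed

lemma exists_good_c: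
  assumes "finite B" "p1 \<noteq> 0" "p2 \<noteq> 0"
  shows "\<exists>c::complex. c \<notin> B \<and> poly p1 c \<noteq> 0 \<and> poly p2 c \<noteq> 0"
proof -
  have "finite (B \<union> {x. poly p1 x = 0} \<union> {x. poly p2 x = 0})"
    using assms poly_roots_finite by auto
  from ex_new_if_finite[OF infinite_UNIV_char_0 this] show ?thesis by auto
qed

lemma pa_deg_mult_eq:
  assumes "A \<noteq> 0" "B \<noteq> 0"
  shows "pa_deg (A * B) = pa_deg A + pa_deg B"
proof -
  obtain c where c: "poly (topf (pa_deg A) A) c \<noteq> 0" "poly (topf (pa_deg B) B) c \<noteq> 0"
    using exists_good_c[of "{}", OF _ top_nonzero[OF assms(1)] top_nonzero[OF assms(2)]] by auto
  note ea = Tc_exact[OF refl c(1)] and eb = Tc_exact[OF refl c(2)]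
  have "Tc c A \<noteq> 0" using ea(2) c(1) by auto
  moreover have "Tc c B \<noteq> 0" using eb(2) c(2) by auto
  ultimately have "degree (Tc c (A * B)) = pa_deg A + pa_deg B"
    by (simp add: Tc_mult degree_mult_eq ea(1) eb(1))
  then have "pa_deg A + pa_deg B \<le> pa_deg (A * B)"
    using degree_le_pa_deg[of "Tc c (A * B)"] pa_deg_Tc[of c "A * B"] by linarith
  then show ?thesis using pa_deg_mult[of A B] by linarith
qed



lemma sum_shift_count: "(\<Sum>i<n + m. (if i < n then 0 else int n)) = int (n * m)"
  by (induction m) auto

lemma resultant_degree_bound:
  fixes p q :: bp
  assumes dp: "degree p = m" and dq: "degree q = n" and pp: "pa_deg p \<le> m" and pq: "pa_deg q \<le> n"
  shows "degree (resultant p q) \<le> m * n"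
proof -
  let ?N = "m + n"
  let ?S = "sylvester_mat p q"
  define cc where "cc i = (if i < n then - int i else int n - int i)" for i
  have Sc: "?S \<in> carrier_mat ?N ?N" using sylvester_carrier_mat[of p q] dp dq by simp
  have entry: "int (degree (?S $$ (i, j))) \<le> int j + cc i"
    if ij: "i < ?N" "j < ?N" and nz: "?S $$ (i, j) \<noteq> 0" for i j
  proof -
    have idx: "?S $$ (i, j) = (if i < n then if i \<le> j \<and> j - i \<le> m then coeff p (m + i - j) else 0
        else if i - n \<le> j \<and> j \<le> i then coeff q (i - j) else 0)"
      using sylvester_index_mat[of i p q j] ij dp dq by simp
    show ?thesis
    proof (cases "i < n")
      case True
      with nz idx have c: "i \<le> j" "j - i \<le> m" "coeff p (m + i - j) \<noteq> 0" by (auto split: if_splits)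
      from pa_deg_ge[OF c(3)] pp have "m + i - j + degree (coeff p (m + i - j)) \<le> m" by linarith
      with c True idx show ?thesis by (simp add: cc_def)
    next
      case False
      with nz idx have c: "i - n \<le> j" "j \<le> i" "coeff q (i - j) \<noteq> 0" by (auto split: if_splits)
      from pa_deg_ge[OF c(3)] pq have "i - j + degree (coeff q (i - j)) \<le> n" by linarith
      with c False idx show ?thesis by (simp add: cc_def)
    qed
  qed
  have sumcc: "(\<Sum>i\<in>{0..<?N}. int i + cc i) = int (m * n)"
  proof -
    have "(\<Sum>i\<in>{0..<?N}. int i + cc i) = (\<Sum>i<n + m. (if i < n then 0 else int n))"
      by (rule sum.cong) (auto simp: cc_def atLeast0LessThan)
    then show ?thesis using sum_shift_count[of n m] by (simp add: mult.commute)
  qed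
  have "resultant p q = (\<Sum>s | s permutes {0..<?N}. of_int (sign s) * (\<Prod>i = 0..<?N. ?S $$ (i, s i)))"
    unfolding resultant_def using Determinant.det_def'[OF Sc] .
  also have "degree \<dots> \<le> m * n"
  proof (rule degree_sum_le)
    show "finite {s. s permutes {0..<?N}}" by (simp add: finite_permutations)
  next
    fix s assume "s \<in> {s. s permutes {0..<?N}}"
    then have s: "s permutes {0..<?N}" by simp
    have "degree (\<Prod>i = 0..<?N. ?S $$ (i, s i)) \<le> m * n"
    proof (cases "\<exists>i\<in>{0..<?N}. ?S $$ (i, s i) = 0")
      case True
      have z: "(\<Prod>i = 0..<?N. ?S $$ (i, s i)) = 0" by (intro prod_zero) (use True in auto)
      show ?thesis unfolding z by simp
    next
      case False
      have si: "s i < ?N" if "i < ?N" for i using permutes_in_image[OF s] that by simp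
      have h1: "degree (\<Prod>i = 0..<?N. ?S $$ (i, s i)) \<le> (\<Sum>i = 0..<?N. degree (?S $$ (i, s i)))"
        using degree_prod_sum_le[of "{0..<?N}" "\<lambda>i. ?S $$ (i, s i)"] by (simp add: o_def)
      have "int (degree (\<Prod>i = 0..<?N. ?S $$ (i, s i))) \<le> int (\<Sum>i = 0..<?N. degree (?S $$ (i, s i)))"
        using h1 by (rule of_nat_mono)
      also have "\<dots> = (\<Sum>i = 0..<?N. int (degree (?S $$ (i, s i))))" by (rule of_nat_sum)
      also have "\<dots> \<le> (\<Sum>i = 0..<?N. int (s i) + cc i)"
        by (rule sum_mono) (use False entry si in auto)
      also have "\<dots> = (\<Sum>i = 0..<?N. int (s i)) + (\<Sum>i = 0..<?N. cc i)" by (simp add: sum.distrib)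
      also have "(\<Sum>i = 0..<?N. int (s i)) = (\<Sum>i = 0..<?N. int i)"
        using sum.reindex_bij_betw[OF permutes_imp_bij[OF s], of int] .
      also have "(\<Sum>i = 0..<?N. int i) + (\<Sum>i = 0..<?N. cc i) = int (m * n)"
        using sumcc by (simp add: sum.distrib)
      finally show ?thesis by linarith
    qed
    then show "degree (of_int (sign s) * (\<Prod>i = 0..<?N. ?S $$ (i, s i))) \<le> m * n"
      using degree_mult_le[of "of_int (sign s) :: complex poly" "\<Prod>i = 0..<?N. ?S $$ (i, s i)"]
      by (simp add: degree_of_int)
  qed
  finally show ?thesis .
qed

lemma pa_deg_0_const:
  assumes "pa_deg F = 0" "F \<noteq> 0"
  shows "\<exists>a. a \<noteq> 0 \<and> (\<forall>x y. ev F x y = a)"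
  using assms pa_deg_0_iff[of F] by auto

theorem BZ:
  fixes F G :: bp
  assumes F0: "F \<noteq> 0" and G0: "G \<noteq> 0" and cop: "coprime F G" and fin: "finite S"
    and zer: "\<And>x y. (x, y) \<in> S \<Longrightarrow> ev F x y = 0 \<and> ev G x y = 0"
  shows "card S \<le> pa_deg F * pa_deg G"
proof (cases "S = {}")
  case True then show ?thesis by simp
next
  case False
  then obtain x1 y1 where xy1: "(x1, y1) \<in> S" by auto
  define m where "m = pa_deg F"
  define n where "n = pa_deg G"
  have m0: "m \<noteq> 0"
  proof
    assume "m = 0"
    then obtain a where "a \<noteq> 0" "\<And>x y. ev F x y = a" using pa_deg_0_const[OF _ F0] m_def by auto
    with zer[OF xy1] show False by simp
  qed
  have n0: "n \<noteq> 0"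
  proof
    assume "n = 0"
    then obtain a where "a \<noteq> 0" "\<And>x y. ev G x y = a" using pa_deg_0_const[OF _ G0] n_def by auto
    with zer[OF xy1] show False by simp
  qed
  define B where "B = (\<lambda>((x1, y1), (x2, y2)). (x1 - x2) / (y1 - y2)) ` (S \<times> S)"
  have finB: "finite B" using fin by (simp add: B_def)
  obtain c where c: "c \<notin> B" "poly (topf m F) c \<noteq> 0" "poly (topf n G) c \<noteq> 0"
    using exists_good_c[OF finB top_nonzero[OF F0] top_nonzero[OF G0]] m_def n_def by auto
  define p where "p = Tc c F"
  define q where "q = Tc c G"
  note ep = Tc_exact[OF m_def[symmetric] c(2), folded p_def]
  note eq = Tc_exact[OF n_def[symmetric] c(3), folded q_def]
  have "coprime p q" unfolding p_def q_def by (rule Tc_coprime[OF cop])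
  then have "gcd p q = 1" by (simp add: coprime_iff_gcd_eq_1)
  then have R0: "resultant p q \<noteq> 0" using resultant_0_gcd[of p q] by simp
  have degR: "degree (resultant p q) \<le> m * n"
    by (rule resultant_degree_bound[OF ep(1) eq(1) ep(3) eq(3)])
  define f where "f = (\<lambda>(x::complex, y::complex). x - c * y)"
  have roots: "poly (resultant p q) (f s) = 0" if s: "s \<in> S" for s
  proof -
    obtain x y where sxy: "s = (x, y)" by (cases s)
    define x0 where "x0 = x - c * y"
    define p0 where "p0 = map_poly (\<lambda>r. poly r x0) p"
    define q0 where "q0 = map_poly (\<lambda>r. poly r x0) q"
    have cp0: "coeff p0 m = poly (topf m F) c" unfolding p0_def by (simp add: coeff_map_poly ep(2))
    have cq0: "coeff q0 n = poly (topf n G) c" unfolding q0_def by (simp add: coeff_map_poly eq(2))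
    have dp0: "degree p0 = degree p"
    proof -
      have "degree p0 \<le> degree p" unfolding p0_def by (rule degree_map_poly_le)
      moreover have "m \<le> degree p0" using cp0 c(2) by (intro le_degree) simp
      ultimately show ?thesis using ep(1) by simp
    qed
    have dq0: "degree q0 = degree q"
    proof -
      have "degree q0 \<le> degree q" unfolding q0_def by (rule degree_map_poly_le)
      moreover have "n \<le> degree q0" using cq0 c(3) by (intro le_degree) simp
      ultimately show ?thesis using eq(1) by simp
    qed
    have res: "resultant p0 q0 = poly (resultant p q) x0"
      unfolding p0_def q0_def by (rule poly_hom.resultant_map_poly) (use dp0 dq0 p0_def q0_def in auto)
    have zp: "poly p0 y = 0" using zer[of x y] s sxy unfolding p0_def x0_def p_def
      by (simp add: ev_def[symmetric] ev_Tc)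
    have zq: "poly q0 y = 0" using zer[of x y] s sxy unfolding q0_def x0_def q_def
      by (simp add: ev_def[symmetric] ev_Tc)
    have "[:-y, 1:] dvd gcd p0 q0" using zp zq by (simp add: poly_eq_0_iff_dvd)
    moreover have "p0 \<noteq> 0" using cp0 c(2) by auto
    then have "gcd p0 q0 \<noteq> 0" by simp
    ultimately have "degree [:-y, 1:] \<le> degree (gcd p0 q0)" by (rule dvd_imp_degree_le)
    then have "degree (gcd p0 q0) \<noteq> 0" by simp
    then have "resultant p0 q0 = 0" using resultant_0_gcd[of p0 q0] by simp
    then show ?thesis using res sxy by (simp add: f_def x0_def)
  qed
  have inj: "inj_on f S"
  proof (rule inj_onI)
    fix s t assume st: "s \<in> S" "t \<in> S" "f s = f t"
    obtain x1 y1 where s: "s = (x1, y1)" by (cases s)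
    obtain x2 y2 where t: "t = (x2, y2)" by (cases t)
    have e: "x1 - c * y1 = x2 - c * y2" using st(3) s t by (simp add: f_def)
    show "s = t"
    proof (cases "y1 = y2")
      case True then show ?thesis using e s t by simp
    next
      case False
      have "c = (x1 - x2) / (y1 - y2)" using e False by (simp add: field_simps)
      then have "c \<in> B" unfolding B_def using st s t by force
      with c(1) show ?thesis by simp
    qed
  qed
  have "card S = card (f ` S)" using card_image[OF inj] by simp
  also have "\<dots> \<le> card {x. poly (resultant p q) x = 0}"
    by (rule card_mono) (use poly_roots_finite[OF R0] roots in auto)
  also have "\<dots> \<le> degree (resultant p q)" by (rule card_poly_roots_bound[OF R0])
  also have "\<dots> \<le> m * n" by (rule degR)
  finally show ?thesis by (simp add: m_def n_def)
qed



definition Pc :: "bp \<Rightarrow> bp" where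
  "Pc P = (\<Sum>j\<le>degree P. \<Sum>k\<le>degree (coeff P j). monom (monom (cnj (coeff (coeff P j) k)) j) k)"

lemma ev_monom2: "ev (monom (monom a j) k) x y = a * x ^ j * y ^ k"
  by (simp add: ev_def Polynomial.map_poly_monom poly_monom)

lemma ev_Pc: "ev (Pc P) (cnj z) z = cnj (pa_eval P z)"
proof -
  have "cnj (pa_eval P z) = (\<Sum>j\<le>degree P. \<Sum>k\<le>degree (coeff P j).
          cnj (coeff (coeff P j) k) * cnj z ^ j * z ^ k)"
    unfolding pa_eval_def by (simp add: Polynomial.poly_altdef sum_distrib_left sum_distrib_right cnj_sum mult_ac)
  then show ?thesis by (simp add: Pc_def ev_sum ev_monom2)
qed

lemma pa_deg_monom2: "pa_deg (monom (monom a j) k) \<le> j + k"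
proof (rule pa_deg_leI)
  fix i assume "coeff (monom (monom a j) k) i \<noteq> 0"
  then have "i = k" "monom a j \<noteq> 0" by (auto split: if_splits)
  then show "i + degree (coeff (monom (monom a j) k) i) \<le> j + k"
    using degree_monom_le[of a j] by simp
qed

lemma pa_deg_Pc: "pa_deg (Pc P) \<le> pa_deg P"
  unfolding Pc_def
proof (intro pa_deg_sum)
  fix j k assume j: "j \<in> {..degree P}" and k: "k \<in> {..degree (coeff P j)}"
  show "pa_deg (monom (monom (cnj (coeff (coeff P j) k)) j) k) \<le> pa_deg P"
  proof (cases "coeff (coeff P j) k = 0")
    case False
    then have nz: "coeff P j \<noteq> 0" by auto
    have "pa_deg (monom (monom (cnj (coeff (coeff P j) k)) j) k) \<le> j + k" by (rule pa_deg_monom2)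
    also have "\<dots> \<le> j + degree (coeff P j)" using k by simp
    also have "\<dots> \<le> pa_deg P" by (rule pa_deg_ge[OF nz])
    finally show ?thesis .
  qed simp
qed

lemma ev_alt: "ev H x y = poly (poly H [:y:]) x"
  by (induction H) (auto simp: ev_pCons)

lemma pderiv_poly_const: "pderiv (poly P [:y:]) = poly (map_poly pderiv P) [:y:]"
  by (induction P) (auto simp: Polynomial.map_poly_pCons pderiv_add pderiv_mult pderiv_pCons pderiv_smult)

lemma DERIV_line: "((\<lambda>t. poly Q (w0 + t * k)) has_field_derivative (poly (pderiv Q) w0 * k)) (at 0)"
proof -
  have e: "(\<lambda>t. poly Q (w0 + t * k)) = (\<lambda>t. poly (pcompose Q [:w0, k:]) t)"
    by (simp add: poly_pcompose algebra_simps)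
  have "poly (pderiv (pcompose Q [:w0, k:])) 0 = poly (pderiv Q) w0 * k"
    by (simp add: pderiv_pcompose poly_pcompose pderiv_pCons)
  then show ?thesis unfolding e using poly_DERIV[of "pcompose Q [:w0, k:]" 0] by simp
qed

lemma ev_deriv:
  "((\<lambda>t. ev P (w0 + t * k) (z0 + t * h)) has_field_derivative
      (h * ev (pderiv P) w0 z0 + k * ev (map_poly pderiv P) w0 z0)) (at 0)"
proof -
  define N where "N = degree P"
  define u where "u j t = poly (coeff P j) (w0 + t * k)" for j t
  define v where "v j t = (z0 + t * h) ^ j" for j t
  define U where "U j = poly (pderiv (coeff P j)) w0 * k" for j
  define V where "V j = poly (pderiv ([:z0, h:] ^ j)) 0" for j
  have du: "(u j has_field_derivative U j) (at 0)" for j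
    unfolding u_def U_def by (rule DERIV_line)
  have dv: "(v j has_field_derivative V j) (at 0)" for j
  proof -
    have e: "v j = (\<lambda>t. poly ([:z0, h:] ^ j) t)" unfolding v_def by (auto simp: poly_power algebra_simps)
    show ?thesis unfolding e V_def by (rule poly_DERIV)
  qed
  have rep: "ev P w x = (\<Sum>j\<le>N. poly (coeff P j) w * x ^ j)" for w x
    by (rule ev_sum_repr) (simp add: N_def)
  have D: "((\<lambda>t. \<Sum>j\<le>N. u j t * v j t) has_field_derivative (\<Sum>j\<le>N. U j * v j 0 + V j * u j 0)) (at 0)"
    by (rule DERIV_sum) (rule DERIV_mult[OF du dv])
  have D1: "((\<lambda>t. \<Sum>j\<le>N. u j t * v j 0) has_field_derivative (\<Sum>j\<le>N. U j * v j 0 + 0 * u j 0)) (at 0)"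
    by (rule DERIV_sum) (rule DERIV_mult[OF du DERIV_const])
  have D2: "((\<lambda>t. \<Sum>j\<le>N. u j 0 * v j t) has_field_derivative (\<Sum>j\<le>N. 0 * v j 0 + V j * u j 0)) (at 0)"
    by (rule DERIV_sum) (rule DERIV_mult[OF DERIV_const dv])
  have E1: "(\<lambda>t. \<Sum>j\<le>N. u j t * v j 0) = (\<lambda>t. poly (poly P [:z0:]) (w0 + t * k))"
  proof
    fix t
    have "(\<Sum>j\<le>N. u j t * v j 0) = ev P (w0 + t * k) z0" by (simp add: rep u_def v_def)
    also have "\<dots> = poly (poly P [:z0:]) (w0 + t * k)" by (rule ev_alt)
    finally show "(\<Sum>j\<le>N. u j t * v j 0) = poly (poly P [:z0:]) (w0 + t * k)" .
  qed
  have E1': "((\<lambda>t. poly (poly P [:z0:]) (w0 + t * k)) has_field_derivative (ev (map_poly pderiv P) w0 z0 * k)) (at 0)"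
    using DERIV_line[of "poly P [:z0:]" w0 k] by (simp add: pderiv_poly_const ev_alt)
  have E2: "(\<lambda>t. \<Sum>j\<le>N. u j 0 * v j t) = (\<lambda>t. poly (map_poly (\<lambda>q. poly q w0) P) (z0 + t * h))"
  proof
    fix t
    have "(\<Sum>j\<le>N. u j 0 * v j t) = ev P w0 (z0 + t * h)" by (simp add: rep u_def v_def)
    then show "(\<Sum>j\<le>N. u j 0 * v j t) = poly (map_poly (\<lambda>q. poly q w0) P) (z0 + t * h)"
      by (simp add: ev_def)
  qed
  have E2': "((\<lambda>t. poly (map_poly (\<lambda>q. poly q w0) P) (z0 + t * h)) has_field_derivative (ev (pderiv P) w0 z0 * h)) (at 0)"
    using DERIV_line[of "map_poly (\<lambda>q. poly q w0) P" z0 h]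
    by (simp add: ev_def poly_hom.map_poly_pderiv)
  have s1: "(\<Sum>j\<le>N. U j * v j 0 + 0 * u j 0) = ev (map_poly pderiv P) w0 z0 * k"
    using DERIV_unique[OF D1] E1' E1 by simp
  have s2: "(\<Sum>j\<le>N. 0 * v j 0 + V j * u j 0) = ev (pderiv P) w0 z0 * h"
    using DERIV_unique[OF D2] E2' E2 by simp
  have "(\<Sum>j\<le>N. U j * v j 0 + V j * u j 0) = h * ev (pderiv P) w0 z0 + k * ev (map_poly pderiv P) w0 z0"
    using s1 s2 by (simp add: sum.distrib mult.commute)
  moreover have "(\<lambda>t. ev P (w0 + t * k) (z0 + t * h)) = (\<lambda>t. \<Sum>j\<le>N. u j t * v j t)"
    by (simp add: rep u_def v_def)
  ultimately show ?thesis using D by simp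
qed

lemma crit:
  fixes P :: bp and s z0 :: complex
  assumes re: "\<And>z. Im (s * pa_eval P z) = 0" and sg: "\<And>z. 0 \<le> Re (s * pa_eval P z)"
    and s0: "s \<noteq> 0" and z0: "pa_eval P z0 = 0"
  shows "ev (pderiv P) (cnj z0) z0 = 0 \<and> ev (map_poly pderiv P) (cnj z0) z0 = 0"
proof -
  define A where "A = ev (pderiv P) (cnj z0) z0"
  define B where "B = ev (map_poly pderiv P) (cnj z0) z0"
  have key: "h * A + cnj h * B = 0" for h
  proof -
    define D where "D = h * A + cnj h * B"
    define \<Phi> where "\<Phi> t = ev P (cnj z0 + t * cnj h) (z0 + t * h)" for t
    have d\<Phi>: "(\<Phi> has_field_derivative D) (at (of_real 0))"
      using ev_deriv[of P "cnj z0" "cnj h" z0 h] unfolding \<Phi>_def D_def A_def B_def by simp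
    have vd: "((\<lambda>t::real. s * \<Phi> (of_real t)) has_vector_derivative (s * D)) (at 0)"
      by (rule has_vector_derivative_mult_right[OF has_vector_derivative_real_field[OF d\<Phi>]])
    have \<Phi>r: "\<Phi> (of_real t) = pa_eval P (z0 + of_real t * h)" for t
      by (simp add: \<Phi>_def pa_eval_ev)
    have dre: "((\<lambda>t. Re (s * \<Phi> (of_real t))) has_real_derivative Re (s * D)) (at 0)"
      by (rule has_field_derivative_Re[OF vd])
    have dim: "((\<lambda>t. Im (s * \<Phi> (of_real t))) has_real_derivative Im (s * D)) (at 0)"
      by (rule has_field_derivative_Im[OF vd])
    have "(\<lambda>t. Im (s * \<Phi> (of_real t))) = (\<lambda>t. 0)" using re \<Phi>r by simp
    then have "((\<lambda>t. Im (s * \<Phi> (of_real t))) has_real_derivative 0) (at 0)" by simp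
    then have i0: "Im (s * D) = 0" using DERIV_unique[OF dim] by simp
    have r0: "Re (s * D) = 0"
    proof (rule DERIV_local_min[OF dre, of 1])
      show "\<forall>y. \<bar>0 - y\<bar> < 1 \<longrightarrow> Re (s * \<Phi> (of_real 0)) \<le> Re (s * \<Phi> (of_real y))"
      proof (intro allI impI)
        fix y :: real
        have "\<Phi> (of_real 0) = 0" using \<Phi>r[of 0] z0 by simp
        then have "Re (s * \<Phi> (of_real 0)) = 0" by simp
        moreover have "0 \<le> Re (s * \<Phi> (of_real y))" unfolding \<Phi>r by (rule sg)
        ultimately show "Re (s * \<Phi> (of_real 0)) \<le> Re (s * \<Phi> (of_real y))" by simp
      qed
    qed simp
    have "s * D = 0" using i0 r0 by (simp add: complex_eq_iff)
    with s0 show ?thesis by (simp add: D_def)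
  qed
  have "A + B = 0" using key[of 1] by simp
  moreover have "\<i> * A - \<i> * B = 0" using key[of "\<i>"] by simp
  ultimately have "A = 0" "B = 0" by (auto simp: algebra_simps)
  then show ?thesis by (simp add: A_def B_def)
qed

lemma real_rotation:
  assumes h: "\<And>z. cnj (pa_eval P z) = u * pa_eval P z" and z1: "pa_eval P z1 \<noteq> 0"
  shows "\<exists>s. s \<noteq> 0 \<and> (\<forall>z. Im (s * pa_eval P z) = 0)"
proof -
  have "norm (cnj (pa_eval P z1)) = norm u * norm (pa_eval P z1)" using h[of z1] by (simp add: norm_mult)
  then have nu: "norm u = 1" using z1 by simp
  define s where "s = csqrt u"
  have s2: "s ^ 2 = u" by (simp add: s_def)
  have "norm s ^ 2 = 1" using nu s2 norm_power[of s 2] by simp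
  then have ns: "norm s = 1" using norm_ge_zero[of s] by (auto simp: power2_eq_1_iff)
  have scs: "s * cnj s = 1"
    using complex_norm_square[of s] ns by simp
  have "s \<noteq> 0" using ns by auto
  moreover have "Im (s * pa_eval P z) = 0" for z
  proof -
    have "cnj (s * pa_eval P z) = cnj s * (s ^ 2 * pa_eval P z)" using h[of z] s2 by simp
    also have "\<dots> = (s * cnj s) * (s * pa_eval P z)" by (simp add: power2_eq_square algebra_simps)
    also have "\<dots> = s * pa_eval P z" using scs by simp
    finally have "cnj (s * pa_eval P z) = s * pa_eval P z" .
    then have "Im (cnj (s * pa_eval P z)) = Im (s * pa_eval P z)" by simp
    then show ?thesis by simp
  qed
  ultimately show ?thesis by blast
qed

lemma sign_const:
  fixes g :: "complex \<Rightarrow> real"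
  assumes cont: "continuous_on UNIV g" and fin: "finite Z" and zg: "\<And>z. g z = 0 \<longleftrightarrow> z \<in> Z"
  shows "(\<forall>z. 0 \<le> g z) \<or> (\<forall>z. g z \<le> 0)"
proof (rule ccontr)
  assume "\<not> ?thesis"
  then obtain a b where ab: "g a < 0" "0 < g b" by (auto simp: not_le)
  have "path_connected (- Z)"
    by (rule path_connected_complement_countable) (use fin countable_finite in auto)
  then have "connected (- Z)" by (rule path_connected_imp_connected)
  moreover have "continuous_on (- Z) g" using cont by (rule continuous_on_subset) simp
  ultimately have c: "connected (g ` (- Z))" using connected_continuous_image by blast
  have "a \<notin> Z" using zg[of a] ab(1) by auto
  moreover have "b \<notin> Z" using zg[of b] ab(2) by auto
  ultimately have "a \<in> - Z" "b \<in> - Z" by auto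
  then have "g a \<in> g ` (- Z)" "g b \<in> g ` (- Z)" by auto
  then have "0 \<in> g ` (- Z)" using c ab unfolding connected_iff_interval by (meson less_imp_le)
  then obtain z where "z \<notin> Z" "g z = 0" by auto
  with zg show False by simp
qed

lemma pa_eval_cont: "continuous_on UNIV (\<lambda>z. Re (s * pa_eval P z))"
  unfolding pa_eval_def by (intro continuous_intros)



lemma ev_smult[simp]: "ev (Polynomial.smult c H) x y = poly c x * ev H x y"
proof -
  have "ev (Polynomial.smult c H) x y = ev ([:c:] * H) x y" by simp
  also have "\<dots> = ev [:c:] x y * ev H x y" by (simp only: ev_mult)
  also have "ev [:c:] x y = poly c x" by (simp add: ev_pCons)
  finally show ?thesis .
qed

lemma pa_deg_pderiv: "pa_deg (pderiv P) \<le> pa_deg P - 1"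
proof (rule pa_deg_leI)
  fix j assume nz: "coeff (pderiv P) j \<noteq> 0"
  have cj: "coeff (pderiv P) j = of_nat (Suc j) * coeff P (Suc j)" by (rule coeff_pderiv)
  then have nz': "coeff P (Suc j) \<noteq> 0" using nz by auto
  have d0: "degree (of_nat (Suc j) :: complex poly) = 0" by (rule degree_of_nat)
  have "degree (coeff (pderiv P) j) \<le> degree (of_nat (Suc j) :: complex poly) + degree (coeff P (Suc j))"
    unfolding cj by (rule degree_mult_le)
  with d0 have "degree (coeff (pderiv P) j) \<le> degree (coeff P (Suc j))" by linarith
  with pa_deg_ge[OF nz'] show "j + degree (coeff (pderiv P) j) \<le> pa_deg P - 1" by linarith
qed

lemma pa_deg_mpderiv: "pa_deg (map_poly pderiv P) \<le> pa_deg P - 1"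
proof (rule pa_deg_leI)
  fix j assume nz: "coeff (map_poly pderiv P) j \<noteq> 0"
  have cj: "coeff (map_poly pderiv P) j = pderiv (coeff P j)" by (simp add: coeff_map_poly)
  then have nz': "coeff P j \<noteq> 0" using nz by auto
  have "degree (coeff P j) \<noteq> 0" using nz cj pderiv_eq_0_iff by fastforce
  moreover have "degree (coeff (map_poly pderiv P) j) = degree (coeff P j) - 1"
    unfolding cj by (rule degree_pderiv)
  ultimately show "j + degree (coeff (map_poly pderiv P) j) \<le> pa_deg P - 1"
    using pa_deg_ge[OF nz'] by linarith
qed

lemma derivs_zero_const:
  assumes "pderiv P = 0" "map_poly pderiv P = 0"
  shows "pa_deg P = 0"
proof -
  have "degree P = 0" using assms(1) pderiv_eq_0_iff by blast
  then have P: "P = [:coeff P 0:]" by (metis degree_0_id)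
  have "coeff (map_poly pderiv P) 0 = pderiv (coeff P 0)" by (simp add: coeff_map_poly)
  then have "pderiv (coeff P 0) = 0" using assms(2) by simp
  then have "degree (coeff P 0) = 0" using pderiv_eq_0_iff by blast
  then have "coeff P 0 = [:coeff (coeff P 0) 0:]" by (metis degree_0_id)
  with P have "P = [:[:coeff (coeff P 0) 0:]:]" by metis
  then show ?thesis by (metis pa_deg_const)
qed

lemma pa_eval_mult: "pa_eval (A * B) z = pa_eval A z * pa_eval B z"
  by (simp add: pa_eval_ev)

lemma pa_zeros_mult: "pa_zeros (A * B) = pa_zeros A \<union> pa_zeros B"
  by (auto simp: pa_zeros_def pa_eval_mult)

lemma finite_zeros_nonzero:
  assumes "finite (pa_zeros P)"
  shows "\<exists>z. pa_eval P z \<noteq> 0"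
proof -
  obtain z where "z \<notin> pa_zeros P" using ex_new_if_finite[OF infinite_UNIV_char_0 assms] by blast
  then show ?thesis by (auto simp: pa_zeros_def)
qed

lemma finite_zeros_P0: "finite (pa_zeros P) \<Longrightarrow> P \<noteq> 0"
  using finite_zeros_nonzero[of P] by (auto simp: pa_eval_ev)

lemma card_zeros_via_BZ:
  fixes P G :: bp
  assumes "P \<noteq> 0" "G \<noteq> 0" "coprime P G" "finite (pa_zeros P)"
    and "\<And>z. z \<in> pa_zeros P \<Longrightarrow> ev G (cnj z) z = 0"
  shows "card (pa_zeros P) \<le> pa_deg P * pa_deg G"
proof -
  let ?S = "(\<lambda>z. (cnj z, z)) ` pa_zeros P"
  have "inj_on (\<lambda>z. (cnj z, z)) (pa_zeros P)" by (auto simp: inj_on_def)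
  then have "card (pa_zeros P) = card ?S" by (simp add: card_image)
  also have "\<dots> \<le> pa_deg P * pa_deg G"
  proof (rule BZ[OF assms(1-3)])
    show "finite ?S" using assms(4) by simp
    fix x y assume "(x, y) \<in> ?S"
    then obtain z where z: "z \<in> pa_zeros P" "x = cnj z" "y = z" by auto
    then show "ev P x y = 0 \<and> ev G x y = 0"
      using assms(5)[OF z(1)] by (auto simp: pa_zeros_def pa_eval_ev)
  qed
  finally show ?thesis .
qed

theorem PB: "finite (pa_zeros P) \<Longrightarrow> card (pa_zeros P) \<le> (pa_deg P)^2"
proof (induction "pa_deg P" arbitrary: P rule: less_induct)
  case less
  define n where "n = pa_deg P"
  have P0: "P \<noteq> 0" using finite_zeros_P0[OF less.prems] .
  obtain z1 where z1: "pa_eval P z1 \<noteq> 0" using finite_zeros_nonzero[OF less.prems] by blast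
  have Pc0: "Pc P \<noteq> 0"
  proof
    assume "Pc P = 0"
    then have "ev (Pc P) (cnj z1) z1 = 0" by simp
    then show False using ev_Pc[of P z1] z1 by simp
  qed
  have degPc: "pa_deg (Pc P) \<le> n" using pa_deg_Pc n_def by simp
  show ?case
  proof (cases "n = 0")
    case True
    then obtain a where "P = [:[:a:]:]" using pa_deg_0_iff[of P] n_def by auto
    then have "pa_zeros P = {}" using z1 by (auto simp: pa_zeros_def pa_eval_ev)
    then show ?thesis by simp
  next
    case n0: False
    show ?thesis
    proof (cases "coprime P (Pc P)")
      case True
      have "card (pa_zeros P) \<le> pa_deg P * pa_deg (Pc P)"
      proof (rule card_zeros_via_BZ[OF P0 Pc0 True less.prems])
        fix z assume "z \<in> pa_zeros P"
        then show "ev (Pc P) (cnj z) z = 0" using ev_Pc[of P z] by (simp add: pa_zeros_def)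
      qed
      also have "\<dots> \<le> n * n" using degPc n_def by simp
      finally show ?thesis by (simp add: n_def power2_eq_square)
    next
      case False
      have g0: "gcd P (Pc P) \<noteq> 0" using P0 by simp
      have gu: "\<not> is_unit (gcd P (Pc P))" using False by (simp only: is_unit_gcd not_False_eq_True)
      obtain Q where Q: "Q dvd gcd P (Pc P)" "prime Q" using prime_divisor_exists[OF g0 gu] by blast
      have QP: "Q dvd P" and QPc: "Q dvd Pc P" using Q(1) dvd_trans by auto
      obtain R where PQR: "P = Q * R" using QP by (elim dvdE)
      have Q0: "Q \<noteq> 0" and R0: "R \<noteq> 0" using P0 PQR by auto
      have degP: "n = pa_deg Q + pa_deg R" using pa_deg_mult_eq[OF Q0 R0] PQR n_def by simp
      have q1: "pa_deg Q \<noteq> 0"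
      proof
        assume "pa_deg Q = 0"
        then obtain a where "Q = [:[:a:]:]" using pa_deg_0_iff[of Q] by auto
        then have "is_unit Q" using Q0 const_unit by auto
        with Q(2) show False by (simp add: prime_def prime_elem_def)
      qed
      have finQ: "finite (pa_zeros Q)" and finR: "finite (pa_zeros R)"
        using less.prems PQR pa_zeros_mult[of Q R] by (auto intro: finite_subset)
      show ?thesis
      proof (cases "pa_deg Q < n")
        case True
        have "pa_deg R < n" using degP q1 by linarith
        have cQ: "card (pa_zeros Q) \<le> (pa_deg Q)^2" using less.hyps[OF _ finQ] True n_def by simp
        have cR: "card (pa_zeros R) \<le> (pa_deg R)^2" using less.hyps[OF _ finR] \<open>pa_deg R < n\<close> n_def by simp
        have "card (pa_zeros P) \<le> card (pa_zeros Q) + card (pa_zeros R)"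
          unfolding PQR pa_zeros_mult by (rule card_Un_le)
        also have "\<dots> \<le> (pa_deg Q)^2 + (pa_deg R)^2" using cQ cR by simp
        also have "\<dots> \<le> (pa_deg Q + pa_deg R)^2" by (simp add: power2_sum)
        finally show ?thesis using degP n_def by simp
      next
        case False
        then have "pa_deg R = 0" using degP by linarith
        then obtain r where r: "R = [:[:r:]:]" using pa_deg_0_iff[of R] by auto
        have r0: "r \<noteq> 0" using R0 r by simp
        have uR: "is_unit R" using r r0 const_unit by simp
        have pP: "prime_elem P" using PQR uR Q(2) prime_elem_mult_unit_left[of R Q]
          by (simp add: mult.commute prime_def)
        have "Q = P * [:[:1 / r:]:]" using PQR r r0 by (simp add: field_simps pCons_one)
        then have "P dvd Q" by (rule dvdI)
        then have "P dvd Pc P" using QPc dvd_trans by blast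
        then obtain M where M: "Pc P = P * M" by (elim dvdE)
        have M0: "M \<noteq> 0" using M Pc0 by auto
        have "pa_deg (Pc P) = n + pa_deg M" using pa_deg_mult_eq[OF P0 M0] M n_def by simp
        then have "pa_deg M = 0" using degPc by simp
        then obtain u where u: "M = [:[:u:]:]" using pa_deg_0_iff[of M] by auto
        have conjrel: "cnj (pa_eval P z) = u * pa_eval P z" for z
          using ev_Pc[of P z] M u by (simp add: pa_eval_ev)
        obtain s where s: "s \<noteq> 0" "\<And>z. Im (s * pa_eval P z) = 0"
          using real_rotation[OF conjrel z1] by blast
        have zg: "Re (s * pa_eval P z) = 0 \<longleftrightarrow> z \<in> pa_zeros P" for z
        proof -
          have "Re (s * pa_eval P z) = 0 \<longleftrightarrow> s * pa_eval P z = 0" using s(2)[of z] by (simp add: complex_eq_iff)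
          then show ?thesis using s(1) by (simp add: pa_zeros_def)
        qed
        from sign_const[OF pa_eval_cont less.prems zg]
        obtain s' where s': "s' \<noteq> 0" "\<And>z. Im (s' * pa_eval P z) = 0" "\<And>z. 0 \<le> Re (s' * pa_eval P z)"
        proof
          assume "\<forall>z. 0 \<le> Re (s * pa_eval P z)"
          then show ?thesis using that[of s] s by blast
        next
          assume h: "\<forall>z. Re (s * pa_eval P z) \<le> 0"
          show ?thesis by (rule that[of "- s"]) (use s h in auto)
        qed
        have crit0: "ev (pderiv P) (cnj z) z = 0 \<and> ev (map_poly pderiv P) (cnj z) z = 0"
          if "z \<in> pa_zeros P" for z
          using crit[OF s'(2) s'(3) s'(1)] that by (simp add: pa_zeros_def)
        define Gd where "Gd = (if pderiv P \<noteq> 0 then pderiv P else map_poly pderiv P)"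
        have Gd0: "Gd \<noteq> 0" using derivs_zero_const[of P] n0 n_def by (auto simp: Gd_def)
        have dGd: "pa_deg Gd \<le> n - 1" using pa_deg_pderiv[of P] pa_deg_mpderiv[of P] n_def
          by (simp add: Gd_def)
        have ndvd: "\<not> P dvd Gd"
        proof
          assume "P dvd Gd"
          then obtain W where W: "Gd = P * W" by (elim dvdE)
          have "W \<noteq> 0" using W Gd0 by auto
          then have "pa_deg Gd = n + pa_deg W" using pa_deg_mult_eq[OF P0] W n_def by simp
          with dGd n0 show False by linarith
        qed
        have cop: "coprime P Gd" by (rule prime_elem_imp_coprime[OF pP ndvd])
        have "card (pa_zeros P) \<le> pa_deg P * pa_deg Gd"
        proof (rule card_zeros_via_BZ[OF P0 Gd0 cop less.prems])
          fix z assume "z \<in> pa_zeros P"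
          then show "ev Gd (cnj z) z = 0" using crit0 by (simp add: Gd_def)
        qed
        also have "\<dots> \<le> n * n"
        proof -
          have "pa_deg Gd \<le> n" using dGd by linarith
          then show ?thesis unfolding n_def[symmetric] by (rule mult_le_mono2)
        qed
        finally show ?thesis by (simp add: n_def power2_eq_square)
      qed
    qed
  qed
qed

lemma sum_sq_le: "sum_list (map (\<lambda>x. x ^ 2) xs) \<le> (sum_list xs :: nat) ^ 2"
proof (induction xs)
  case (Cons a xs)
  then show ?case by (simp add: power2_sum)
qed simp

lemma sum_sq_less:
  assumes "length xs \<ge> 2" "\<forall>x\<in>set xs. (x::nat) \<ge> 1"
  shows "sum_list (map (\<lambda>x. x ^ 2) xs) < (sum_list xs) ^ 2"
proof -
  obtain a ys where xs: "xs = a # ys" using assms(1) by (cases xs) auto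
  obtain b zs where ys: "ys = b # zs" using assms(1) xs by (cases ys) auto
  have a1: "a \<ge> 1" and b1: "b \<ge> 1" using assms(2) xs ys by auto
  have "sum_list ys \<ge> 1" using ys b1 by simp
  then have pos: "2 * a * sum_list ys > 0" using a1 by simp
  have le: "sum_list (map (\<lambda>x. x ^ 2) ys) \<le> (sum_list ys) ^ 2" by (rule sum_sq_le)
  have e1: "(sum_list xs) ^ 2 = a ^ 2 + (sum_list ys) ^ 2 + 2 * a * sum_list ys"
    using xs by (simp add: power2_sum)
  have e2: "sum_list (map (\<lambda>x. x ^ 2) xs) = a ^ 2 + sum_list (map (\<lambda>x. x ^ 2) ys)"
    using xs by simp
  show ?thesis unfolding e1 e2 using le pos by linarith
qed

lemma pa_deg_prod_list:
  "(\<forall>Q\<in>set Ps. Q \<noteq> 0) \<Longrightarrow> pa_deg (prod_list Ps) = sum_list (map pa_deg Ps)"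
proof (induction Ps)
  case (Cons Q Ps)
  have "prod_list Ps \<noteq> 0" using Cons.prems by (auto simp: prod_list_zero_iff)
  then show ?case using Cons pa_deg_mult_eq[of Q "prod_list Ps"] by simp
qed simp

lemma card_prod_list:
  "finite (pa_zeros (prod_list Qs)) \<Longrightarrow>
     card (pa_zeros (prod_list Qs)) \<le> sum_list (map (\<lambda>Q. (pa_deg Q)^2) Qs)"
proof (induction Qs)
  case Nil
  have "pa_zeros (prod_list []) = {}" by (simp add: pa_zeros_def pa_eval_ev)
  then show ?case by simp
next
  case (Cons Q Qs)
  have z: "pa_zeros (prod_list (Q # Qs)) = pa_zeros Q \<union> pa_zeros (prod_list Qs)"
    by (simp add: pa_zeros_mult)
  have f1: "finite (pa_zeros Q)" and f2: "finite (pa_zeros (prod_list Qs))"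
    using Cons.prems z by auto
  have "card (pa_zeros (prod_list (Q # Qs))) \<le> card (pa_zeros Q) + card (pa_zeros (prod_list Qs))"
    unfolding z by (rule card_Un_le)
  also have "\<dots> \<le> (pa_deg Q)^2 + sum_list (map (\<lambda>Q. (pa_deg Q)^2) Qs)"
    using PB[OF f1] Cons.IH[OF f2] by simp
  finally show ?case by simp
qed



theorem theorem2p13:
  fixes P :: polyanalytic and n :: nat
  assumes "pa_deg P = n"
    and "finite (pa_zeros P)"
  shows "(\<forall>Ps :: polyanalytic list.
            length Ps \<ge> 2 \<and> (\<forall>Q\<in>set Ps. pa_deg Q \<ge> 1) \<and> P = prod_list Ps \<longrightarrow>
              card (pa_zeros P) \<le> (\<Sum>Q\<leftarrow>Ps. (pa_deg Q)^2) \<and>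
              (\<Sum>Q\<leftarrow>Ps. (pa_deg Q)^2) < n^2)
       \<and> (n \<ge> 2 \<and> int (card (pa_zeros P)) \<ge> int n^2 - 2 * int n + 3 \<longrightarrow> pa_irreducible P)"
proof -
  have P0: "P \<noteq> 0" using finite_zeros_P0[OF assms(2)] .
  have partI: "card (pa_zeros P) \<le> (\<Sum>Q\<leftarrow>Ps. (pa_deg Q)^2) \<and> (\<Sum>Q\<leftarrow>Ps. (pa_deg Q)^2) < n^2"
    if h: "length Ps \<ge> 2" "\<forall>Q\<in>set Ps. pa_deg Q \<ge> 1" "P = prod_list Ps" for Ps
  proof
    show "card (pa_zeros P) \<le> (\<Sum>Q\<leftarrow>Ps. (pa_deg Q)^2)"
      using card_prod_list[of Ps] assms(2) h(3) by simp
    have nz: "\<forall>Q\<in>set Ps. Q \<noteq> 0" using P0 h(3) by (auto simp: prod_list_zero_iff)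
    have n: "n = sum_list (map pa_deg Ps)" using pa_deg_prod_list[OF nz] h(3) assms(1) by simp
    have "sum_list (map (\<lambda>x. x ^ 2) (map pa_deg Ps)) < (sum_list (map pa_deg Ps)) ^ 2"
      by (rule sum_sq_less) (use h in auto)
    then show "(\<Sum>Q\<leftarrow>Ps. (pa_deg Q)^2) < n^2" using n by (simp add: o_def)
  qed
  have partII: "pa_irreducible P"
    if h: "n \<ge> 2" "int (card (pa_zeros P)) \<ge> int n^2 - 2 * int n + 3"
  proof -
    have "\<not> pa_reducible P"
    proof
      assume "pa_reducible P"
      then obtain P1 P2 where PP: "P = P1 * P2" "pa_deg P1 \<ge> 1" "pa_deg P2 \<ge> 1"
        unfolding pa_reducible_def by blast
      have "P = prod_list [P1, P2]" using PP by simp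
      from partI[of "[P1, P2]"] this PP
      have c: "card (pa_zeros P) \<le> (pa_deg P1)^2 + (pa_deg P2)^2" by simp
      have "P1 \<noteq> 0" "P2 \<noteq> 0" using P0 PP by auto
      then have nn: "n = pa_deg P1 + pa_deg P2" using pa_deg_mult_eq PP assms(1) by simp
      define a where "a = int (pa_deg P1)"
      define b where "b = int (pa_deg P2)"
      have a1: "a \<ge> 1" "b \<ge> 1" using PP by (auto simp: a_def b_def)
      have "0 \<le> (a - 1) * (b - 1)" using a1 by simp
      moreover have "int (card (pa_zeros P)) \<le> a^2 + b^2"
      proof -
        have "int (card (pa_zeros P)) \<le> int ((pa_deg P1)^2 + (pa_deg P2)^2)" using c by (rule of_nat_mono)
        then show ?thesis unfolding a_def b_def by simp
      qed
      moreover have "int n = a + b" using nn by (simp add: a_def b_def)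
      ultimately have "int (card (pa_zeros P)) \<le> (int n)^2 - 2 * int n + 2"
        by (simp add: power2_eq_square algebra_simps)
      with h(2) show False by linarith
    qed
    then show ?thesis by (simp add: pa_irreducible_def)
  qed
  show ?thesis using partI partII by blast
qed

end
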